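(* Let $\Phi$ be an irreducible root system (e.g. that of a simple complex Lie algebra) with Weyl group $W$, highest root $\theta$, and positive roots determined by a Borel subalgebra. If $\alpha\in\Phi$ is a root of the same length as $\theta$, then there is a unique maximal element $w\in W$ in the Bruhat order among those satisfying $w^{-1}\theta=\alpha$.
   Context: The Bruhat order on $W$ is with respect to the simple reflections determined by the choice of positive roots. *)

theory Defs
  imports "HOL-Analysis.Analysis"
begin

definition refl :: "'a::euclidean_space \<Rightarrow> 'a \<Rightarrow> 'a" where
  "refl \<alpha> v = v - ((2 * (v \<bullet> \<alpha>)) / (\<alpha> \<bullet> \<alpha>)) *\<^sub>R \<alpha>"

definition root_system :: "'a::euclidean_space set \<Rightarrow> bool" where
  "root_system \<Phi> \<longleftrightarrow>
     finite \<Phi> \<and> 0 \<notin> \<Phi> \<and> span \<Phi> = UNIV \<and>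
     (\<forall>\<alpha>\<in>\<Phi>. refl \<alpha> ` \<Phi> = \<Phi>) \<and>
     (\<forall>\<alpha>\<in>\<Phi>. \<forall>\<beta>\<in>\<Phi>. 2 * (\<beta> \<bullet> \<alpha>) / (\<alpha> \<bullet> \<alpha>) \<in> \<int>) \<and>
     (\<forall>\<alpha>\<in>\<Phi>. \<forall>c::real. c *\<^sub>R \<alpha> \<in> \<Phi> \<longrightarrow> c = 1 \<or> c = -1)"

definition irreducible_rs :: "'a::euclidean_space set \<Rightarrow> bool" where
  "irreducible_rs \<Phi> \<longleftrightarrow> \<Phi> \<noteq> {} \<and>
     \<not> (\<exists>A B. A \<union> B = \<Phi> \<and> A \<noteq> {} \<and> B \<noteq> {} \<and> (\<forall>a\<in>A. \<forall>b\<in>B. a \<bullet> b = 0))"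

text \<open>A choice of positive roots is given by a regular vector c (equivalently a Borel subalgebra).\<close>
definition regular_vec :: "'a::euclidean_space set \<Rightarrow> 'a \<Rightarrow> bool" where
  "regular_vec \<Phi> c \<longleftrightarrow> (\<forall>\<alpha>\<in>\<Phi>. c \<bullet> \<alpha> \<noteq> 0)"

definition pos_roots :: "'a::euclidean_space set \<Rightarrow> 'a \<Rightarrow> 'a set" where
  "pos_roots \<Phi> c = {\<alpha>\<in>\<Phi>. c \<bullet> \<alpha> > 0}"

definition simple_roots :: "'a::euclidean_space set \<Rightarrow> 'a \<Rightarrow> 'a set" where
  "simple_roots \<Phi> c = {\<alpha>\<in>pos_roots \<Phi> c.
      \<not> (\<exists>\<beta>\<in>pos_roots \<Phi> c. \<exists>\<gamma>\<in>pos_roots \<Phi> c. \<alpha> = \<beta> + \<gamma>)}"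

definition nonneg_comb :: "'a::euclidean_space set \<Rightarrow> 'a \<Rightarrow> bool" where
  "nonneg_comb S v \<longleftrightarrow> (\<exists>f. (\<forall>s\<in>S. f s \<ge> 0) \<and> v = (\<Sum>s\<in>S. f s *\<^sub>R s))"

definition highest_root :: "'a::euclidean_space set \<Rightarrow> 'a \<Rightarrow> 'a \<Rightarrow> bool" where
  "highest_root \<Phi> c \<theta> \<longleftrightarrow> \<theta> \<in> \<Phi> \<and>
     (\<forall>\<beta>\<in>\<Phi>. nonneg_comb (simple_roots \<Phi> c) (\<theta> - \<beta>))"

inductive_set weyl_group :: "'a::euclidean_space set \<Rightarrow> ('a \<Rightarrow> 'a) set" for \<Phi> where
  weyl_id: "id \<in> weyl_group \<Phi>"
| weyl_step: "w \<in> weyl_group \<Phi> \<Longrightarrow> \<alpha> \<in> \<Phi> \<Longrightarrow> refl \<alpha> \<circ> w \<in> weyl_group \<Phi>"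

definition word_prod :: "'a::euclidean_space list \<Rightarrow> 'a \<Rightarrow> 'a" where
  "word_prod ss = foldr (\<lambda>a f. refl a \<circ> f) ss id"

definition weyl_length :: "'a::euclidean_space set \<Rightarrow> 'a \<Rightarrow> ('a \<Rightarrow> 'a) \<Rightarrow> nat" where
  "weyl_length \<Phi> c w = (LEAST n. \<exists>ss. length ss = n \<and> set ss \<subseteq> simple_roots \<Phi> c \<and> w = word_prod ss)"

definition coxeter_reflections :: "'a::euclidean_space set \<Rightarrow> 'a \<Rightarrow> ('a \<Rightarrow> 'a) set" where
  "coxeter_reflections \<Phi> c =
     {w \<circ> refl s \<circ> inv w | w s. w \<in> weyl_group \<Phi> \<and> s \<in> simple_roots \<Phi> c}"

definition bruhat_step :: "'a::euclidean_space set \<Rightarrow> 'a \<Rightarrow> ('a \<Rightarrow> 'a) \<Rightarrow> ('a \<Rightarrow> 'a) \<Rightarrow> bool" where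
  "bruhat_step \<Phi> c u v \<longleftrightarrow> u \<in> weyl_group \<Phi> \<and>
     (\<exists>t\<in>coxeter_reflections \<Phi> c. v = u \<circ> t \<and> weyl_length \<Phi> c u < weyl_length \<Phi> c v)"

definition bruhat_le :: "'a::euclidean_space set \<Rightarrow> 'a \<Rightarrow> ('a \<Rightarrow> 'a) \<Rightarrow> ('a \<Rightarrow> 'a) \<Rightarrow> bool" where
  "bruhat_le \<Phi> c = (bruhat_step \<Phi> c)\<^sup>*\<^sup>*"

end

theory Submission
  imports Defs
begin

lemma refl_linear: "linear (refl a)"
proof (rule linearI)
  fix x y :: 'a
  show "refl a (x + y) = refl a x + refl a y"
    unfolding refl_def by (simp add: inner_add_left add_divide_distrib distrib_left scaleR_add_left)
next
  fix r :: real and x :: 'a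
  show "refl a (r *\<^sub>R x) = r *\<^sub>R refl a x"
    unfolding refl_def by (simp add: scaleR_diff_right)
qed

lemma refl_inner: assumes "a \<noteq> 0" shows "refl a u \<bullet> refl a v = u \<bullet> v"
proof -
  have aa: "a \<bullet> a \<noteq> 0" using assms by simp
  define p where "p = u \<bullet> a"
  define q where "q = v \<bullet> a"
  define n where "n = a \<bullet> a"
  have "refl a u \<bullet> refl a v = (u - (2*p/n) *\<^sub>R a) \<bullet> (v - (2*q/n) *\<^sub>R a)"
    unfolding refl_def p_def q_def n_def by simp
  also have "\<dots> = u \<bullet> v - (2*q/n) * (u \<bullet> a) - (2*p/n) * (a \<bullet> v) + (2*p/n)*(2*q/n)*(a \<bullet> a)"
    unfolding inner_diff_left inner_diff_right inner_scaleR_left inner_scaleR_right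
    by (simp add: algebra_simps)
  also have "\<dots> = u \<bullet> v - (2*q/n) * p - (2*p/n) * q + (2*p/n)*(2*q/n)*n"
    unfolding p_def q_def n_def by (simp add: inner_commute)
  also have "\<dots> = u \<bullet> v" using aa unfolding n_def by (simp add: field_simps)
  finally show ?thesis .
qed

lemma refl_self: assumes "a \<noteq> 0" shows "refl a a = - a"
proof -
  have "a \<bullet> a \<noteq> 0" using assms by simp
  then show ?thesis unfolding refl_def by (simp add: scaleR_2)
qed

lemma refl_refl: assumes "a \<noteq> 0" shows "refl a (refl a v) = v"
proof -
  have aa: "a \<bullet> a \<noteq> 0" using assms by simp
  have "refl a v \<bullet> a = v \<bullet> a - (2 * (v \<bullet> a) / (a \<bullet> a)) * (a \<bullet> a)"
    unfolding refl_def by (simp only: inner_diff_left inner_scaleR_left)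
  also have "\<dots> = - (v \<bullet> a)" using aa by simp
  finally have e: "refl a v \<bullet> a = - (v \<bullet> a)" .
  have "refl a (refl a v) = refl a v - (2 * (refl a v \<bullet> a) / (a \<bullet> a)) *\<^sub>R a"
    unfolding refl_def[of a "refl a v"] by simp
  also have "\<dots> = refl a v + (2 * (v \<bullet> a) / (a \<bullet> a)) *\<^sub>R a" unfolding e by simp
  also have "\<dots> = v" unfolding refl_def by simp
  finally show ?thesis .
qed

lemma refl_orth: "v \<bullet> a = 0 \<Longrightarrow> refl a v = v"
  unfolding refl_def by simp

lemma refl_neg: "refl (- a) = refl a"
  unfolding refl_def by (auto simp: fun_eq_iff)

lemma refl_comp_refl: "a \<noteq> 0 \<Longrightarrow> refl a \<circ> refl a = id"
  by (auto simp: fun_eq_iff refl_refl)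

lemma refl_conj_pt:
  assumes "linear x" "\<And>u v. x u \<bullet> x v = u \<bullet> v"
  shows "refl (x b) (x u) = x (refl b u)"
  using assms unfolding refl_def by (simp add: linear_diff linear_scale)

lemma wp_nil[simp]: "word_prod [] = id" by (simp add: word_prod_def)
lemma wp_cons[simp]: "word_prod (a # l) = refl a \<circ> word_prod l" by (simp add: word_prod_def)
lemma wp_append: "word_prod (l1 @ l2) = word_prod l1 \<circ> word_prod l2"
  by (induction l1) auto
lemma wp_linear: "linear (word_prod l)"
proof (induction l)
  case Nil show ?case using linear_id by (simp add: id_def)
next
  case (Cons a l)
  have "linear (refl a \<circ> word_prod l)" by (rule linear_compose[OF Cons refl_linear])
  then show ?case by (simp only: wp_cons)
qed

locale RS =
  fixes \<Phi> :: "'a::euclidean_space set" and c :: 'a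
  assumes rs: "root_system \<Phi>" and reg: "regular_vec \<Phi> c"
begin

abbreviation "W \<equiv> weyl_group \<Phi>"
abbreviation "Pos \<equiv> pos_roots \<Phi> c"
abbreviation "Sim \<equiv> simple_roots \<Phi> c"
abbreviation "len \<equiv> weyl_length \<Phi> c"

lemma fin: "finite \<Phi>" using rs by (simp add: root_system_def)
lemma zero_notin: "0 \<notin> \<Phi>" using rs by (simp add: root_system_def)
lemma nz: "a \<in> \<Phi> \<Longrightarrow> a \<noteq> 0" using zero_notin by auto
lemma refl_img: "a \<in> \<Phi> \<Longrightarrow> refl a ` \<Phi> = \<Phi>" using rs by (simp add: root_system_def)
lemma refl_mem: "a \<in> \<Phi> \<Longrightarrow> b \<in> \<Phi> \<Longrightarrow> refl a b \<in> \<Phi>" using refl_img by blast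
lemma integ: "a \<in> \<Phi> \<Longrightarrow> b \<in> \<Phi> \<Longrightarrow> 2 * (b \<bullet> a) / (a \<bullet> a) \<in> \<int>"
  using rs by (simp add: root_system_def)
lemma reduced: "a \<in> \<Phi> \<Longrightarrow> t *\<^sub>R a \<in> \<Phi> \<Longrightarrow> t = 1 \<or> t = -1"
  using rs by (simp add: root_system_def)
lemma spanU: "span \<Phi> = UNIV" using rs by (simp add: root_system_def)
lemma neg_mem: "a \<in> \<Phi> \<Longrightarrow> - a \<in> \<Phi>"
  using refl_mem[of a a] refl_self[OF nz] by auto
lemma c_nz: "a \<in> \<Phi> \<Longrightarrow> c \<bullet> a \<noteq> 0" using reg by (simp add: regular_vec_def)
lemma pos_iff: "a \<in> Pos \<longleftrightarrow> a \<in> \<Phi> \<and> c \<bullet> a > 0" by (simp add: pos_roots_def)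
lemma sim_pos: "a \<in> Sim \<Longrightarrow> a \<in> Pos" by (simp add: simple_roots_def)
lemma sim_mem: "a \<in> Sim \<Longrightarrow> a \<in> \<Phi>" using sim_pos pos_iff by blast
lemma sim_c: "a \<in> Sim \<Longrightarrow> c \<bullet> a > 0" using sim_pos pos_iff by blast
lemma neg_pos: "a \<in> \<Phi> \<Longrightarrow> c \<bullet> a < 0 \<Longrightarrow> - a \<in> Pos"
  using neg_mem pos_iff by (simp add: inner_minus_right)

lemma wp_inner: "set l \<subseteq> \<Phi> \<Longrightarrow> word_prod l u \<bullet> word_prod l v = u \<bullet> v"
  by (induction l arbitrary: u v) (auto simp: refl_inner nz)
lemma wp_mem: "set l \<subseteq> \<Phi> \<Longrightarrow> b \<in> \<Phi> \<Longrightarrow> word_prod l b \<in> \<Phi>"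
  by (induction l) (auto simp: refl_mem)
lemma wp_rev: "set l \<subseteq> \<Phi> \<Longrightarrow> word_prod (rev l) \<circ> word_prod l = id"
proof (induction l)
  case (Cons a l)
  have "word_prod (rev (a # l)) \<circ> word_prod (a # l) = word_prod (rev l) \<circ> (refl a \<circ> refl a) \<circ> word_prod l"
    by (simp add: wp_append o_assoc)
  also have "\<dots> = word_prod (rev l) \<circ> word_prod l"
    using Cons.prems refl_comp_refl[OF nz, of a] by (simp add: comp_assoc)
  also have "\<dots> = id" using Cons.IH Cons.prems by (auto simp: fun_eq_iff)
  finally show ?case .
qed simp
lemma wp_rev2: "set l \<subseteq> \<Phi> \<Longrightarrow> word_prod l \<circ> word_prod (rev l) = id"
  using wp_rev[of "rev l"] by simp
lemma wp_inv: "set l \<subseteq> \<Phi> \<Longrightarrow> inv (word_prod l) = word_prod (rev l)"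
  using wp_rev wp_rev2 inv_unique_comp by blast
lemma wp_bij: "set l \<subseteq> \<Phi> \<Longrightarrow> bij (word_prod l)"
  using wp_rev wp_rev2 o_bij by blast

lemma W_iff: "w \<in> W \<longleftrightarrow> (\<exists>l. set l \<subseteq> \<Phi> \<and> w = word_prod l)"
proof
  assume "w \<in> W" then show "\<exists>l. set l \<subseteq> \<Phi> \<and> w = word_prod l"
  proof induction
    case weyl_id then show ?case by (intro exI[of _ "[]"]) simp
  next
    case (weyl_step w a)
    then obtain l where "set l \<subseteq> \<Phi>" "w = word_prod l" by blast
    then show ?case using weyl_step by (intro exI[of _ "a # l"]) simp
  qed
next
  assume "\<exists>l. set l \<subseteq> \<Phi> \<and> w = word_prod l"
  then obtain l where l: "set l \<subseteq> \<Phi>" "w = word_prod l" by blast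
  have "set l \<subseteq> \<Phi> \<Longrightarrow> word_prod l \<in> W"
    by (induction l) (auto intro: weyl_group.intros)
  then show "w \<in> W" using l by simp
qed

lemma W_E: assumes "w \<in> W" obtains l where "set l \<subseteq> \<Phi>" "w = word_prod l"
  using assms W_iff by blast

lemma W_linear: "w \<in> W \<Longrightarrow> linear w" using wp_linear by (elim W_E) simp
lemma W_inner: "w \<in> W \<Longrightarrow> w u \<bullet> w v = u \<bullet> v" using wp_inner by (elim W_E) simp
lemma W_mem: "w \<in> W \<Longrightarrow> b \<in> \<Phi> \<Longrightarrow> w b \<in> \<Phi>" using wp_mem by (elim W_E) simp
lemma W_bij: "w \<in> W \<Longrightarrow> bij w" using wp_bij by (elim W_E) simp
lemma W_inv: "w \<in> W \<Longrightarrow> inv w \<in> W"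
proof -
  assume "w \<in> W"
  then obtain l where "set l \<subseteq> \<Phi>" "w = word_prod l" by (elim W_E)
  then show ?thesis unfolding W_iff by (intro exI[of _ "rev l"]) (simp add: wp_inv)
qed
lemma W_comp: "w \<in> W \<Longrightarrow> v \<in> W \<Longrightarrow> w \<circ> v \<in> W"
proof -
  assume "w \<in> W" "v \<in> W"
  then obtain l1 l2 where "set l1 \<subseteq> \<Phi>" "w = word_prod l1" "set l2 \<subseteq> \<Phi>" "v = word_prod l2"
    by (metis W_E)
  then show ?thesis unfolding W_iff by (intro exI[of _ "l1 @ l2"]) (simp add: wp_append)
qed
lemma W_refl: "a \<in> \<Phi> \<Longrightarrow> refl a \<in> W"
  using weyl_step[OF weyl_id, of a] by simp
lemma W_inv_apply: "w \<in> W \<Longrightarrow> w (inv w x) = x"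
  using bij_inv_eq_iff[OF W_bij, of w "inv w x" x] by simp
lemma W_apply_inv: "w \<in> W \<Longrightarrow> inv w (w x) = x"
  by (simp add: W_bij bij_is_inj)
lemma W_neg: "w \<in> W \<Longrightarrow> w (- x) = - w x"
  by (rule linear_neg[OF W_linear])

lemma refl_conj: assumes "w \<in> W" shows "refl (w b) = w \<circ> refl b \<circ> inv w"
proof
  fix x
  have "refl (w b) (w (inv w x)) = w (refl b (inv w x))"
    by (rule refl_conj_pt[OF W_linear[OF assms] W_inner[OF assms]])
  then show "refl (w b) x = (w \<circ> refl b \<circ> inv w) x" using W_inv_apply[OF assms] by simp
qed

lemma W_finite: "finite W"
proof -
  have inj: "inj_on (\<lambda>w. restrict w \<Phi>) W"
  proof (rule inj_onI)
    fix v w assume vw: "v \<in> W" "w \<in> W" "restrict v \<Phi> = restrict w \<Phi>"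
    show "v = w"
    proof
      fix x
      have "x \<in> span \<Phi>" using spanU by simp
      moreover have "v b = w b" if "b \<in> \<Phi>" for b
      proof -
        have "restrict v \<Phi> b = restrict w \<Phi> b" using vw(3) by simp
        then show ?thesis using that by simp
      qed
      ultimately show "v x = w x"
        using linear_eq_on_span[OF W_linear[OF vw(1)] W_linear[OF vw(2)]] by blast
    qed
  qed
  have "(\<lambda>w. restrict w \<Phi>) ` W \<subseteq> (\<Pi>\<^sub>E i\<in>\<Phi>. \<Phi>)" using W_mem by (auto simp: PiE_def)
  moreover have "finite (\<Pi>\<^sub>E i\<in>\<Phi>. \<Phi>)" using fin by (simp add: finite_PiE)
  ultimately have "finite ((\<lambda>w. restrict w \<Phi>) ` W)" by (rule finite_subset)
  then show ?thesis using inj by (rule finite_imageD)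
qed

end

context RS begin

lemma sim_sub: "Sim \<subseteq> \<Phi>" using sim_mem by blast
lemma sim_fin: "finite Sim" using sim_sub fin finite_subset by blast
lemma pos_sub: "Pos \<subseteq> \<Phi>" using pos_iff by blast
lemma pos_fin: "finite Pos" using pos_sub fin finite_subset by blast

lemma pos_or_neg: "a \<in> \<Phi> \<Longrightarrow> c \<bullet> a > 0 \<or> c \<bullet> a < 0"
  using c_nz by force

lemma not_sim_dec: "a \<in> Pos \<Longrightarrow> a \<notin> Sim \<Longrightarrow> \<exists>b\<in>Pos. \<exists>g\<in>Pos. a = b + g"
  unfolding simple_roots_def by blast

lemma sim_nodec: "a \<in> Sim \<Longrightarrow> b \<in> Pos \<Longrightarrow> g \<in> Pos \<Longrightarrow> a \<noteq> b + g"
  unfolding simple_roots_def by blast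

lemma pos_induct:
  assumes step: "\<And>a. a \<in> Pos \<Longrightarrow> (\<And>b. b \<in> Pos \<Longrightarrow> c \<bullet> b < c \<bullet> a \<Longrightarrow> P b) \<Longrightarrow> P a"
  shows "a \<in> Pos \<Longrightarrow> P a"
proof (induction "card {b\<in>Pos. c \<bullet> b < c \<bullet> a}" arbitrary: a rule: less_induct)
  case (less a)
  show ?case
  proof (rule step[OF less.prems])
    fix b assume b: "b \<in> Pos" "c \<bullet> b < c \<bullet> a"
    have "{x\<in>Pos. c \<bullet> x < c \<bullet> b} \<subset> {x\<in>Pos. c \<bullet> x < c \<bullet> a}"
      using b by auto
    then have "card {x\<in>Pos. c \<bullet> x < c \<bullet> b} < card {x\<in>Pos. c \<bullet> x < c \<bullet> a}"
      by (rule psubset_card_mono[rotated]) (use pos_fin in auto)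
    then show "P b" using less.hyps b(1) by blast
  qed
qed

lemma nn_add: "nonneg_comb S u \<Longrightarrow> nonneg_comb S v \<Longrightarrow> nonneg_comb S (u + v)"
proof -
  assume "nonneg_comb S u" "nonneg_comb S v"
  then obtain f g where f: "\<forall>s\<in>S. f s \<ge> 0" "u = (\<Sum>s\<in>S. f s *\<^sub>R s)"
    and g: "\<forall>s\<in>S. g s \<ge> 0" "v = (\<Sum>s\<in>S. g s *\<^sub>R s)" unfolding nonneg_comb_def by blast
  show ?thesis unfolding nonneg_comb_def
    by (rule exI[of _ "\<lambda>s. f s + g s"]) (use f g in \<open>auto simp: scaleR_add_left sum.distrib\<close>)
qed

lemma nn_single: assumes "finite S" "s \<in> S" shows "nonneg_comb S s"
proof -
  have "(\<Sum>t\<in>S. (if t = s then 1 else 0) *\<^sub>R t) = (\<Sum>t\<in>S. if t = s then t else 0)"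
    by (rule sum.cong) auto
  also have "\<dots> = s" using assms by (simp add: sum.delta')
  finally show ?thesis unfolding nonneg_comb_def
    by (intro exI[of _ "\<lambda>t. if t = s then 1 else 0"]) auto
qed

lemma pos_comb: assumes "a0 \<in> Pos" shows "nonneg_comb Sim a0"
proof (rule pos_induct[of "nonneg_comb Sim" a0, OF _ assms])
  fix a assume a: "a \<in> Pos" and IH: "\<And>b. b \<in> Pos \<Longrightarrow> c \<bullet> b < c \<bullet> a \<Longrightarrow> nonneg_comb Sim b"
  show "nonneg_comb Sim a"
  proof (cases "a \<in> Sim")
    case True then show ?thesis using nn_single sim_fin by blast
  next
    case False
    then obtain b g where bg: "b \<in> Pos" "g \<in> Pos" "a = b + g" using not_sim_dec a by blast
    have "c \<bullet> b < c \<bullet> a" "c \<bullet> g < c \<bullet> a" using bg pos_iff by (auto simp: inner_add_right)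
    then show ?thesis using IH bg nn_add by metis
  qed
qed

lemma nn_inner: "(\<forall>s\<in>S. l \<bullet> s \<ge> 0) \<Longrightarrow> nonneg_comb S v \<Longrightarrow> l \<bullet> v \<ge> 0"
  unfolding nonneg_comb_def
  by (auto simp: inner_sum_right intro!: sum_nonneg)

lemma root_diff:
  assumes a: "a \<in> \<Phi>" and b: "b \<in> \<Phi>" and ne: "a \<noteq> b" and pos: "a \<bullet> b > 0"
  shows "a - b \<in> \<Phi>"
proof -
  have aa: "a \<bullet> a > 0" and bb: "b \<bullet> b > 0" using nz a b by auto
  define t where "t = (a \<bullet> b) / (a \<bullet> a)"
  define v where "v = b - t *\<^sub>R a"
  have vv: "v \<bullet> v = b \<bullet> b - (a \<bullet> b)^2 / (a \<bullet> a)"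
    unfolding v_def t_def using aa
    by (simp add: inner_diff_left inner_diff_right inner_commute power2_eq_square field_simps)
  have "v \<noteq> 0"
  proof
    assume "v = 0"
    then have "b = t *\<^sub>R a" unfolding v_def by simp
    then have "t = 1 \<or> t = -1" using reduced a b by metis
    moreover have "t > 0" unfolding t_def using pos aa by simp
    ultimately have "b = a" using \<open>b = t *\<^sub>R a\<close> by auto
    then show False using ne by simp
  qed
  then have "v \<bullet> v > 0" by simp
  then have lt: "(a \<bullet> b)^2 < (a \<bullet> a) * (b \<bullet> b)" using vv aa by (simp add: field_simps)
  define n where "n = 2 * (a \<bullet> b) / (b \<bullet> b)"
  define m where "m = 2 * (b \<bullet> a) / (a \<bullet> a)"
  have nI: "n \<in> \<int>" unfolding n_def using integ[OF b a] .
  have mI: "m \<in> \<int>" unfolding m_def using integ[OF a b] .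
  have n0: "n > 0" unfolding n_def using pos bb by simp
  have m0: "m > 0" unfolding m_def using pos aa by (simp add: inner_commute)
  have "n * m = 4 * (a \<bullet> b)^2 / ((a \<bullet> a) * (b \<bullet> b))"
    unfolding n_def m_def by (simp add: inner_commute power2_eq_square field_simps)
  also have "\<dots> < 4" using lt aa bb by (simp add: field_simps)
  finally have nm: "n * m < 4" .
  obtain N where N: "n = of_int N" using nI Ints_cases by blast
  obtain M where M: "m = of_int M" using mI Ints_cases by blast
  have "N \<ge> 1" "M \<ge> 1" using n0 m0 N M by auto
  moreover have "real_of_int (N * M) < 4" using nm N M by simp
  ultimately have "N = 1 \<or> M = 1"
  proof -
    assume h: "N \<ge> 1" "M \<ge> 1" "real_of_int (N * M) < 4"
    show "N = 1 \<or> M = 1"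
    proof (rule ccontr)
      assume "\<not> (N = 1 \<or> M = 1)"
      then have "N \<ge> 2" "M \<ge> 2" using h by auto
      then have "N * M \<ge> 2 * 2" using mult_mono by fastforce
      then show False using h(3) by linarith
    qed
  qed
  then show ?thesis
  proof
    assume "N = 1"
    then have h: "2 * (a \<bullet> b) / (b \<bullet> b) = 1" using N n_def of_int_1 by metis
    have "refl b a = a - b" by (simp only: refl_def h scaleR_one)
    then show ?thesis using refl_mem[OF b a] by simp
  next
    assume "M = 1"
    then have h: "2 * (b \<bullet> a) / (a \<bullet> a) = 1" using M m_def of_int_1 by metis
    have "refl a b = b - a" by (simp only: refl_def h scaleR_one)
    then have "b - a \<in> \<Phi>" using refl_mem[OF a b] by simp
    then show ?thesis using neg_mem by fastforce
  qed
qed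

lemma sim_obtuse: assumes "a \<in> Sim" "b \<in> Sim" "a \<noteq> b" shows "a \<bullet> b \<le> 0"
proof (rule ccontr)
  assume "\<not> a \<bullet> b \<le> 0"
  then have d: "a - b \<in> \<Phi>" using root_diff sim_mem assms by simp
  show False
  proof (cases "c \<bullet> (a - b) > 0")
    case True
    then have "a - b \<in> Pos" using d pos_iff by blast
    moreover have "a = (a - b) + b" by simp
    ultimately show False using sim_nodec[OF assms(1)] sim_pos[OF assms(2)] by blast
  next
    case False
    then have "c \<bullet> (a - b) < 0" using pos_or_neg d by fastforce
    then have "b - a \<in> Pos" using neg_pos[OF d] by simp
    moreover have "b = (b - a) + a" by simp
    ultimately show False using sim_nodec[OF assms(2)] sim_pos[OF assms(1)] by blast
  qed
qed

end

context RS begin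

lemma nnE: assumes "nonneg_comb S v" obtains f where "\<forall>s\<in>S. f s \<ge> 0" "v = (\<Sum>s\<in>S. f s *\<^sub>R s)"
  using assms unfolding nonneg_comb_def by blast

lemma refl_sim_pos: assumes a: "a \<in> Sim" and d: "\<delta> \<in> Pos" and ne: "\<delta> \<noteq> a"
  shows "refl a \<delta> \<in> Pos"
proof (rule ccontr)
  assume nP: "refl a \<delta> \<notin> Pos"
  have aP: "a \<in> \<Phi>" using a sim_mem by blast
  have dP: "\<delta> \<in> \<Phi>" using d pos_iff by blast
  have r: "refl a \<delta> \<in> \<Phi>" using refl_mem[OF aP dP] .
  have "c \<bullet> refl a \<delta> < 0" using nP r pos_iff pos_or_neg by blast
  define e where "e = - refl a \<delta>"
  have eP: "e \<in> Pos" unfolding e_def using neg_pos[OF r] \<open>c \<bullet> refl a \<delta> < 0\<close> .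
  define k where "k = 2 * (\<delta> \<bullet> a) / (a \<bullet> a)"
  have sumde: "\<delta> + e = k *\<^sub>R a" unfolding e_def refl_def k_def by simp
  obtain f where f0: "\<forall>s\<in>Sim. f s \<ge> 0" and fd: "\<delta> = (\<Sum>s\<in>Sim. f s *\<^sub>R s)"
    using pos_comb[OF d] by (rule nnE)
  obtain g where g0: "\<forall>s\<in>Sim. g s \<ge> 0" and ge: "e = (\<Sum>s\<in>Sim. g s *\<^sub>R s)"
    using pos_comb[OF eP] by (rule nnE)
  define h where "h s = f s + g s" for s
  have h0: "\<forall>s\<in>Sim. h s \<ge> 0" using f0 g0 unfolding h_def by auto
  have hsum: "(\<Sum>s\<in>Sim. h s *\<^sub>R s) = k *\<^sub>R a"
    unfolding h_def scaleR_add_left sum.distrib using fd ge sumde by simp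
  define u where "u = (\<Sum>s\<in>Sim-{a}. h s *\<^sub>R s)"
  have "(\<Sum>s\<in>Sim. h s *\<^sub>R s) = h a *\<^sub>R a + u"
    unfolding u_def using sum.remove[OF sim_fin a] by simp
  then have u: "u = (k - h a) *\<^sub>R a" using hsum by (simp add: algebra_simps)
  have "u \<bullet> a = (\<Sum>s\<in>Sim-{a}. h s * (s \<bullet> a))" unfolding u_def by (simp add: inner_sum_left)
  also have "\<dots> \<le> 0"
  proof (rule sum_nonpos)
    fix s assume s: "s \<in> Sim - {a}"
    have "s \<bullet> a \<le> 0" using sim_obtuse[of s a] s a by auto
    moreover have "h s \<ge> 0" using h0 s by auto
    ultimately show "h s * (s \<bullet> a) \<le> 0" by (simp add: mult_nonneg_nonpos)
  qed
  finally have ua: "u \<bullet> a \<le> 0" .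
  have aa: "a \<bullet> a > 0" using nz[OF aP] by simp
  have "u \<bullet> a = (k - h a) * (a \<bullet> a)" using u by simp
  then have kh: "k - h a \<le> 0" using ua aa by (simp add: mult_le_0_iff)
  have ca: "c \<bullet> a > 0" using sim_c[OF a] .
  have cu_eq: "c \<bullet> u = (\<Sum>s\<in>Sim-{a}. h s * (c \<bullet> s))" unfolding u_def by (simp add: inner_sum_right)
  have terms0: "\<forall>s\<in>Sim-{a}. h s * (c \<bullet> s) \<ge> 0"
  proof
    fix s assume "s \<in> Sim-{a}"
    then show "h s * (c \<bullet> s) \<ge> 0" using h0 sim_c[of s] by (simp add: less_imp_le)
  qed
  have "c \<bullet> u \<ge> 0" unfolding cu_eq using terms0 by (intro sum_nonneg) blast
  moreover have "c \<bullet> u = (k - h a) * (c \<bullet> a)" using u by simp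
  moreover have "(k - h a) * (c \<bullet> a) \<le> 0" using kh ca by (simp add: mult_nonpos_nonneg)
  ultimately have "c \<bullet> u = 0" by linarith
  then have "\<forall>s\<in>Sim-{a}. h s * (c \<bullet> s) = 0"
    using sum_nonneg_eq_0_iff[of "Sim-{a}" "\<lambda>s. h s * (c \<bullet> s)"] terms0 sim_fin cu_eq by auto
  then have "\<forall>s\<in>Sim-{a}. h s = 0" using sim_c by (metis DiffD1 less_irrefl mult_eq_0_iff)
  then have fz: "\<forall>s\<in>Sim-{a}. f s = 0" using f0 g0 unfolding h_def by force
  have "\<delta> = f a *\<^sub>R a + (\<Sum>s\<in>Sim-{a}. f s *\<^sub>R s)"
    unfolding fd using sum.remove[OF sim_fin a] by simp
  also have "(\<Sum>s\<in>Sim-{a}. f s *\<^sub>R s) = 0" using fz by simp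
  finally have da: "\<delta> = f a *\<^sub>R a" by simp
  then have "f a = 1 \<or> f a = -1" using reduced[OF aP] dP by simp
  moreover have "c \<bullet> \<delta> > 0" using d pos_iff by blast
  ultimately have "f a = 1" using da ca by auto
  then show False using da ne by simp
qed

lemma pos_has_sim: assumes "a \<in> Pos" shows "\<exists>s\<in>Sim. a \<bullet> s > 0"
proof (rule ccontr)
  assume "\<not> (\<exists>s\<in>Sim. a \<bullet> s > 0)"
  then have n: "\<forall>s\<in>Sim. a \<bullet> s \<le> 0" by auto
  obtain f where f0: "\<forall>s\<in>Sim. f s \<ge> 0" and fa: "a = (\<Sum>s\<in>Sim. f s *\<^sub>R s)"
    using pos_comb[OF assms] by (rule nnE)
  have "a \<bullet> a = (\<Sum>s\<in>Sim. f s * (a \<bullet> s))"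
    by (subst (2) fa) (simp add: inner_sum_right)
  also have "\<dots> \<le> 0" using f0 n by (intro sum_nonpos) (simp add: mult_nonneg_nonpos)
  finally have "a \<bullet> a \<le> 0" .
  moreover have "a \<noteq> 0" using assms pos_iff nz by blast
  ultimately show False by (metis inner_gt_zero_iff not_le)
qed

lemma pos_word: assumes "a0 \<in> Pos" shows "\<exists>xs b. set xs \<subseteq> Sim \<and> b \<in> Sim \<and> a0 = word_prod xs b"
proof (rule pos_induct[of _ a0, OF _ assms])
  fix a assume a: "a \<in> Pos" and IH: "\<And>b. b \<in> Pos \<Longrightarrow> c \<bullet> b < c \<bullet> a \<Longrightarrow> \<exists>xs b'. set xs \<subseteq> Sim \<and> b' \<in> Sim \<and> b = word_prod xs b'"
  show "\<exists>xs b. set xs \<subseteq> Sim \<and> b \<in> Sim \<and> a = word_prod xs b"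
  proof (cases "a \<in> Sim")
    case True then show ?thesis by (intro exI[of _ "[]"] exI[of _ a]) simp
  next
    case False
    obtain s where s: "s \<in> Sim" "a \<bullet> s > 0" using pos_has_sim[OF a] by blast
    have ne: "a \<noteq> s" using False s by auto
    define a' where "a' = refl s a"
    have a'P: "a' \<in> Pos" unfolding a'_def by (rule refl_sim_pos[OF s(1) a ne])
    have ss: "s \<bullet> s > 0" using nz sim_mem[OF s(1)] by simp
    have k: "2 * (a \<bullet> s) / (s \<bullet> s) > 0" using s(2) ss by simp
    have "c \<bullet> a' = c \<bullet> a - (2 * (a \<bullet> s) / (s \<bullet> s)) * (c \<bullet> s)"
      unfolding a'_def refl_def by (simp add: inner_diff_right)
    also have "\<dots> < c \<bullet> a" using mult_pos_pos[OF k sim_c[OF s(1)]] by linarith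
    finally obtain xs b where xs: "set xs \<subseteq> Sim" "b \<in> Sim" "a' = word_prod xs b"
      using IH[OF a'P] by blast
    have "a = refl s a'" unfolding a'_def using refl_refl[OF nz[OF sim_mem[OF s(1)]]] by simp
    then have "a = word_prod (s # xs) b" using xs by simp
    then show ?thesis using xs s by (intro exI[of _ "s # xs"] exI[of _ b]) simp
  qed
qed

lemma root_word: assumes "a \<in> \<Phi>" shows "\<exists>xs b. set xs \<subseteq> Sim \<and> b \<in> Sim \<and> a = word_prod xs b"
proof (cases "c \<bullet> a > 0")
  case True then show ?thesis using pos_word pos_iff assms by blast
next
  case False
  then have "- a \<in> Pos" using neg_pos[OF assms] pos_or_neg[OF assms] by blast
  then obtain xs b where xs: "set xs \<subseteq> Sim" "b \<in> Sim" "- a = word_prod xs b"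
    using pos_word by blast
  have "a = - word_prod xs b" using xs(3) by (metis minus_minus)
  also have "\<dots> = word_prod xs (- b)" using linear_neg[OF wp_linear] by metis
  also have "\<dots> = word_prod (xs @ [b]) b"
    using refl_self[OF nz[OF sim_mem[OF xs(2)]]] by (simp add: wp_append)
  finally show ?thesis using xs by (intro exI[of _ "xs @ [b]"] exI[of _ b]) simp
qed

lemma simlist_W: "set xs \<subseteq> Sim \<Longrightarrow> word_prod xs \<in> W"
  unfolding W_iff using sim_sub by blast

lemma refl_word: assumes "a \<in> \<Phi>"
  shows "\<exists>xs b. set xs \<subseteq> Sim \<and> b \<in> Sim \<and> refl a = word_prod xs \<circ> refl b \<circ> inv (word_prod xs)
          \<and> refl a = word_prod (xs @ [b] @ rev xs)"
proof -
  obtain xs b where xs: "set xs \<subseteq> Sim" "b \<in> Sim" "a = word_prod xs b" using root_word[OF assms] by blast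
  have e: "refl a = word_prod xs \<circ> refl b \<circ> inv (word_prod xs)"
    using refl_conj[OF simlist_W[OF xs(1)]] xs(3) by simp
  also have "\<dots> = word_prod (xs @ [b] @ rev xs)"
    using wp_inv[of xs] xs(1) sim_sub by (simp add: wp_append comp_assoc)
  finally show ?thesis using e xs by blast
qed

lemma gen: "w \<in> W \<Longrightarrow> \<exists>l. set l \<subseteq> Sim \<and> w = word_prod l"
proof (induction rule: weyl_group.induct)
  case weyl_id then show ?case by (intro exI[of _ "[]"]) simp
next
  case (weyl_step w a)
  then obtain l where l: "set l \<subseteq> Sim" "w = word_prod l" by blast
  obtain xs b where xs: "set xs \<subseteq> Sim" "b \<in> Sim" "refl a = word_prod (xs @ [b] @ rev xs)"
    using refl_word[OF weyl_step(2)] by blast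
  show ?case using l xs by (intro exI[of _ "(xs @ [b] @ rev xs) @ l"]) (simp add: wp_append)
qed

lemma refl_cox: assumes "a \<in> \<Phi>" shows "refl a \<in> coxeter_reflections \<Phi> c"
proof -
  obtain xs b where xs: "set xs \<subseteq> Sim" "b \<in> Sim" "refl a = word_prod xs \<circ> refl b \<circ> inv (word_prod xs)"
    using refl_word[OF assms] by blast
  then show ?thesis unfolding coxeter_reflections_def using simlist_W[OF xs(1)] by blast
qed

end

context RS begin

lemma len_word: assumes "w \<in> W" shows "\<exists>l. set l \<subseteq> Sim \<and> length l = len w \<and> w = word_prod l"
proof -
  obtain l where l: "set l \<subseteq> Sim" "w = word_prod l" using gen[OF assms] by blast
  have "\<exists>ss. length ss = len w \<and> set ss \<subseteq> Sim \<and> w = word_prod ss"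
    unfolding weyl_length_def by (rule LeastI[of _ "length l"]) (use l in blast)
  then show ?thesis by blast
qed

lemma len_le: assumes "set l \<subseteq> Sim" shows "len (word_prod l) \<le> length l"
  unfolding weyl_length_def by (rule Least_le) (use assms in blast)

lemma len0: assumes "w \<in> W" "len w = 0" shows "w = id"
  using len_word[OF assms(1)] assms(2) by auto

lemma G: "set ss \<subseteq> Sim \<Longrightarrow> \<beta> \<in> Pos \<Longrightarrow> c \<bullet> word_prod ss \<beta> < 0 \<Longrightarrow>
   \<exists>i<length ss. word_prod ss \<circ> refl \<beta> = word_prod (take i ss @ drop (Suc i) ss)"
proof (induction ss)
  case Nil then show ?case using pos_iff by simp
next
  case (Cons x ys)
  define Y where "Y = word_prod ys"
  have ysS: "set ys \<subseteq> Sim" and xS: "x \<in> Sim" using Cons.prems by auto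
  have YW: "Y \<in> W" unfolding Y_def using simlist_W[OF ysS] .
  have bP: "\<beta> \<in> \<Phi>" using Cons.prems pos_iff by blast
  show ?case
  proof (cases "c \<bullet> Y \<beta> < 0")
    case True
    then obtain i where i: "i < length ys" "Y \<circ> refl \<beta> = word_prod (take i ys @ drop (Suc i) ys)"
      using Cons.IH[OF ysS Cons.prems(2)] unfolding Y_def by blast
    have "word_prod (x # ys) \<circ> refl \<beta> = refl x \<circ> (Y \<circ> refl \<beta>)" unfolding Y_def by (simp add: comp_assoc)
    also have "\<dots> = refl x \<circ> word_prod (take i ys @ drop (Suc i) ys)" by (simp only: i(2))
    also have "\<dots> = word_prod (take (Suc i) (x # ys) @ drop (Suc (Suc i)) (x # ys))" by simp
    finally have eq: "word_prod (x # ys) \<circ> refl \<beta> = word_prod (take (Suc i) (x # ys) @ drop (Suc (Suc i)) (x # ys))" .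
    show ?thesis by (rule exI[of _ "Suc i"], intro conjI, simp add: i(1), rule eq)
  next
    case False
    have YbP: "Y \<beta> \<in> \<Phi>" using W_mem[OF YW bP] .
    then have "c \<bullet> Y \<beta> > 0" using False pos_or_neg by blast
    then have "Y \<beta> \<in> Pos" using YbP pos_iff by blast
    moreover have "refl x (Y \<beta>) \<notin> Pos" using Cons.prems(3) pos_iff unfolding Y_def by simp
    ultimately have eq: "Y \<beta> = x" using refl_sim_pos[OF xS] by blast
    have "word_prod (x # ys) \<circ> refl \<beta> = Y"
    proof
      fix v
      have "(word_prod (x # ys) \<circ> refl \<beta>) v = refl (Y \<beta>) (Y (refl \<beta> v))" unfolding eq by (simp add: Y_def)
      also have "\<dots> = Y (refl \<beta> (refl \<beta> v))" by (rule refl_conj_pt[OF W_linear[OF YW] W_inner[OF YW]])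
      also have "\<dots> = Y v" using refl_refl[OF nz[OF bP]] by simp
      finally show "(word_prod (x # ys) \<circ> refl \<beta>) v = Y v" .
    qed
    then have e2: "word_prod (x # ys) \<circ> refl \<beta> = word_prod (take 0 (x # ys) @ drop (Suc 0) (x # ys))"
      by (simp only: Y_def take_0 drop_Suc_Cons drop_0 append_Nil)
    show ?thesis by (rule exI[of _ 0], intro conjI, simp, rule e2)
  qed
qed

lemma L1: assumes w: "w \<in> W" and b: "\<beta> \<in> Pos" and neg: "c \<bullet> w \<beta> < 0"
  shows "len (w \<circ> refl \<beta>) < len w"
proof -
  obtain l where l: "set l \<subseteq> Sim" "length l = len w" "w = word_prod l" using len_word[OF w] by blast
  obtain i where i: "i < length l" "w \<circ> refl \<beta> = word_prod (take i l @ drop (Suc i) l)"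
    using G[OF l(1) b] neg l(3) by blast
  have "set (take i l @ drop (Suc i) l) \<subseteq> Sim" using l(1) by (auto dest: in_set_takeD in_set_dropD)
  then have "len (w \<circ> refl \<beta>) \<le> length (take i l @ drop (Suc i) l)" using len_le i(2) by metis
  also have "\<dots> < length l" using i(1) by simp
  finally show ?thesis using l(2) by simp
qed

lemma L2: assumes w: "w \<in> W" and pos: "len w > 0" shows "\<exists>a\<in>Sim. c \<bullet> w a < 0"
proof -
  obtain l where l: "set l \<subseteq> Sim" "length l = len w" "w = word_prod l" using len_word[OF w] by blast
  then have "l \<noteq> []" using pos by auto
  then obtain ys a where ya: "l = ys @ [a]" by (metis rev_exhaust)
  have aS: "a \<in> Sim" and ysS: "set ys \<subseteq> Sim" using l(1) ya by auto
  have aP: "a \<in> \<Phi>" using sim_mem[OF aS] .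
  have wa: "w a = - word_prod ys a"
    using l(3) ya refl_self[OF nz[OF aP]] linear_neg[OF wp_linear] by (simp add: wp_append)
  show ?thesis
  proof (rule ccontr)
    assume "\<not> (\<exists>a\<in>Sim. c \<bullet> w a < 0)"
    then have "\<not> c \<bullet> w a < 0" using aS by blast
    moreover have "w a \<in> \<Phi>" using W_mem[OF w aP] .
    ultimately have "c \<bullet> w a > 0" using pos_or_neg by blast
    then have "c \<bullet> word_prod ys a < 0" using wa by simp
    then obtain i where i: "i < length ys" "word_prod ys \<circ> refl a = word_prod (take i ys @ drop (Suc i) ys)"
      using G[OF ysS sim_pos[OF aS]] by blast
    have "w = word_prod ys \<circ> refl a" using l(3) ya by (simp add: wp_append)
    also have "\<dots> = word_prod (take i ys @ drop (Suc i) ys)" using i(2) .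
    moreover have "set (take i ys @ drop (Suc i) ys) \<subseteq> Sim" using ysS by (auto dest: in_set_takeD in_set_dropD)
    ultimately have "len w \<le> length (take i ys @ drop (Suc i) ys)"
      using len_le by metis
    also have "\<dots> < length l" using i(1) ya by simp
    finally show False using l(2) by simp
  qed
qed

end

context RS begin

lemma S_iff: "w \<in> W \<Longrightarrow> inv w t = a \<longleftrightarrow> w a = t"
  using bij_inv_eq_iff[OF W_bij, of w a t] by auto

lemma bl_len: "bruhat_le \<Phi> c w u \<Longrightarrow> u = w \<or> len w < len u"
  unfolding bruhat_le_def
proof (induction rule: rtranclp_induct)
  case base then show ?case by simp
next
  case (step y z)
  then have "len y < len z" unfolding bruhat_step_def by blast
  then show ?case using step.IH by auto
qed

lemma sim_c_nonneg: "\<forall>s\<in>Sim. c \<bullet> s \<ge> 0" using sim_c less_imp_le by blast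

context
  fixes \<theta> \<alpha> :: 'a
  assumes hr: "highest_root \<Phi> c \<theta>" and aP: "\<alpha> \<in> \<Phi>" and eqlen: "\<alpha> \<bullet> \<alpha> = \<theta> \<bullet> \<theta>"
begin

lemma thP: "\<theta> \<in> \<Phi>" using hr highest_root_def by blast
lemma hi: "\<beta> \<in> \<Phi> \<Longrightarrow> nonneg_comb Sim (\<theta> - \<beta>)" using hr highest_root_def by blast

lemma th_dom: "\<forall>s\<in>Sim. \<theta> \<bullet> s \<ge> 0"
proof
  fix s assume s: "s \<in> Sim"
  have sP: "s \<in> \<Phi>" using sim_mem[OF s] .
  have "c \<bullet> (\<theta> - refl s \<theta>) \<ge> 0" using nn_inner[OF sim_c_nonneg hi[OF refl_mem[OF sP thP]]] .
  moreover have "\<theta> - refl s \<theta> = (2 * (\<theta> \<bullet> s) / (s \<bullet> s)) *\<^sub>R s" unfolding refl_def by simp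
  ultimately have "(2 * (\<theta> \<bullet> s) / (s \<bullet> s)) * (c \<bullet> s) \<ge> 0" by simp
  then have "2 * (\<theta> \<bullet> s) / (s \<bullet> s) \<ge> 0" using sim_c[OF s] by (meson mult_neg_pos not_le)
  moreover have "s \<bullet> s > 0" using nz[OF sP] by simp
  ultimately show "\<theta> \<bullet> s \<ge> 0" by (simp add: zero_le_divide_iff)
qed

lemma exists_S: "\<exists>x\<in>W. x \<alpha> = \<theta>"
proof -
  define F where "F = (\<lambda>x. c \<bullet> x \<alpha>) ` W"
  have Ffin: "finite F" unfolding F_def using W_finite by simp
  have "id \<in> W" by (rule weyl_id)
  then have Fne: "F \<noteq> {}" unfolding F_def by blast
  have "Max F \<in> F" using Max_in[OF Ffin Fne] .
  then obtain x0 where x0: "x0 \<in> W" "c \<bullet> x0 \<alpha> = Max F"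
    unfolding F_def by (auto elim!: imageE)
  define \<mu> where "\<mu> = x0 \<alpha>"
  have muP: "\<mu> \<in> \<Phi>" unfolding \<mu>_def using W_mem[OF x0(1) aP] .
  have mu_dom: "\<forall>s\<in>Sim. \<mu> \<bullet> s \<ge> 0"
  proof (rule ballI, rule ccontr)
    fix s assume s: "s \<in> Sim" and n: "\<not> \<mu> \<bullet> s \<ge> 0"
    have sP: "s \<in> \<Phi>" using sim_mem[OF s] .
    have "refl s \<circ> x0 \<in> W" using W_comp[OF W_refl[OF sP] x0(1)] .
    then have "c \<bullet> (refl s \<circ> x0) \<alpha> \<in> F" unfolding F_def by (rule imageI)
    then have "c \<bullet> refl s \<mu> \<in> F" unfolding \<mu>_def by simp
    then have le: "c \<bullet> refl s \<mu> \<le> c \<bullet> \<mu>" using Max_ge[OF Ffin] x0(2) unfolding \<mu>_def by simp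
    have ss: "s \<bullet> s > 0" using nz[OF sP] by simp
    have k: "2 * (\<mu> \<bullet> s) / (s \<bullet> s) < 0" using n ss by (simp add: divide_neg_pos)
    have "c \<bullet> refl s \<mu> = c \<bullet> \<mu> - (2 * (\<mu> \<bullet> s) / (s \<bullet> s)) * (c \<bullet> s)"
      unfolding refl_def by (simp add: inner_diff_right)
    moreover have "(2 * (\<mu> \<bullet> s) / (s \<bullet> s)) * (c \<bullet> s) < 0" using mult_neg_pos[OF k sim_c[OF s]] .
    ultimately show False using le by linarith
  qed
  have mm: "\<mu> \<bullet> \<mu> = \<theta> \<bullet> \<theta>" unfolding \<mu>_def using W_inner[OF x0(1)] eqlen by simp
  have d: "nonneg_comb Sim (\<theta> - \<mu>)" using hi[OF muP] .
  have t1: "\<theta> \<bullet> (\<theta> - \<mu>) \<ge> 0" using nn_inner[OF th_dom d] .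
  have t2: "\<mu> \<bullet> (\<theta> - \<mu>) \<ge> 0" using nn_inner[OF mu_dom d] .
  have "(\<theta> - \<mu>) \<bullet> (\<theta> - \<mu>) = \<theta> \<bullet> (\<theta> - \<mu>) - \<mu> \<bullet> (\<theta> - \<mu>)" by (simp add: inner_diff_left)
  also have "\<dots> = 0" using t1 t2 mm by (simp add: inner_diff_right inner_commute)
  finally have "\<theta> = \<mu>" by simp
  then show ?thesis using x0(1) unfolding \<mu>_def by blast
qed

definition "maxS w \<longleftrightarrow> w \<in> W \<and> inv w \<theta> = \<alpha> \<and> (\<forall>u. u \<in> W \<and> inv u \<theta> = \<alpha> \<and> bruhat_le \<Phi> c w u \<longrightarrow> u = w)"

lemma exists_max: "\<exists>w. maxS w"
proof -
  define S where "S = {w\<in>W. w \<alpha> = \<theta>}"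
  have Sfin: "finite S" unfolding S_def using W_finite by simp
  have Sne: "S \<noteq> {}" unfolding S_def using exists_S by blast
  have "Max (len ` S) \<in> len ` S" using Sfin Sne by (intro Max_in) auto
  then obtain w0 where w0: "w0 \<in> S" "len w0 = Max (len ` S)" by (auto elim!: imageE)
  have "maxS w0" unfolding maxS_def
  proof (intro conjI allI impI)
    show "w0 \<in> W" using w0 S_def by blast
    show "inv w0 \<theta> = \<alpha>" using w0 S_def S_iff by blast
    fix u assume u: "u \<in> W \<and> inv u \<theta> = \<alpha> \<and> bruhat_le \<Phi> c w0 u"
    then have "u \<in> S" unfolding S_def using S_iff by blast
    then have "len u \<le> len w0" using w0(2) Sfin by simp
    then show "u = w0" using bl_len u by force
  qed
  then show ?thesis by blast
qed

lemma max_P: assumes m: "maxS w" and g: "\<gamma> \<in> Pos" and orth: "\<gamma> \<bullet> \<theta> = 0"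
  shows "c \<bullet> inv w \<gamma> < 0"
proof (rule ccontr)
  assume nn: "\<not> c \<bullet> inv w \<gamma> < 0"
  have wW: "w \<in> W" and wa: "w \<alpha> = \<theta>" using m unfolding maxS_def using S_iff by auto
  have gP: "\<gamma> \<in> \<Phi>" using g pos_iff by blast
  define \<beta> where "\<beta> = inv w \<gamma>"
  have bP: "\<beta> \<in> \<Phi>" unfolding \<beta>_def using W_mem[OF W_inv[OF wW] gP] .
  have bpos: "\<beta> \<in> Pos" using nn pos_or_neg[OF bP] bP pos_iff unfolding \<beta>_def by blast
  have wb: "w \<beta> = \<gamma>" unfolding \<beta>_def using W_inv_apply[OF wW] .
  define u where "u = refl \<gamma> \<circ> w"
  have uW: "u \<in> W" unfolding u_def using W_comp[OF W_refl[OF gP] wW] .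
  have ua: "u \<alpha> = \<theta>" unfolding u_def using wa refl_orth[of \<theta> \<gamma>] orth by (simp add: inner_commute)
  have uw: "u = w \<circ> refl \<beta>"
  proof
    fix v
    have "u v = refl (w \<beta>) (w v)" unfolding u_def wb by simp
    also have "\<dots> = w (refl \<beta> v)" by (rule refl_conj_pt[OF W_linear[OF wW] W_inner[OF wW]])
    finally show "u v = (w \<circ> refl \<beta>) v" by simp
  qed
  have ub: "u \<beta> = - \<gamma>" unfolding uw using refl_self[OF nz[OF bP]] W_neg[OF wW] wb by simp
  have "c \<bullet> u \<beta> < 0" using ub g pos_iff by simp
  then have "len (u \<circ> refl \<beta>) < len u" using L1[OF uW bpos] by blast
  moreover have "u \<circ> refl \<beta> = w" unfolding uw using refl_comp_refl[OF nz[OF bP]] by (simp add: comp_assoc)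
  ultimately have lt: "len w < len u" by simp
  have "bruhat_step \<Phi> c w u" unfolding bruhat_step_def using wW refl_cox[OF bP] uw lt by blast
  then have "bruhat_le \<Phi> c w u" unfolding bruhat_le_def by blast
  moreover have "inv u \<theta> = \<alpha>" using S_iff[OF uW] ua by blast
  ultimately have "u = w" using m uW unfolding maxS_def by blast
  then have "u \<beta> = w \<beta>" by simp
  then have e: "- \<gamma> = \<gamma>" using ub wb by simp
  have "(2::real) *\<^sub>R \<gamma> = \<gamma> - (- \<gamma>)" by (simp add: scaleR_2)
  also have "\<dots> = 0" using e by simp
  finally have "\<gamma> = 0" by simp
  then show False using nz[OF gP] by simp
qed

lemma max_unique: assumes m1: "maxS w1" and m2: "maxS w2" shows "w1 = w2"
proof -
  have w1W: "w1 \<in> W" and w1a: "w1 \<alpha> = \<theta>" using m1 unfolding maxS_def using S_iff by auto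
  have w2W: "w2 \<in> W" and w2a: "w2 \<alpha> = \<theta>" and i2: "inv w2 \<theta> = \<alpha>" using m2 unfolding maxS_def using S_iff by auto
  define y where "y = w1 \<circ> inv w2"
  have yW: "y \<in> W" unfolding y_def using W_comp[OF w1W W_inv[OF w2W]] .
  have yt: "y \<theta> = \<theta>" unfolding y_def using i2 w1a by simp
  have good: "c \<bullet> y a > 0" if a: "a \<in> Sim" "a \<bullet> \<theta> = 0" for a
  proof -
    have aPos: "a \<in> Pos" using sim_pos[OF a(1)] .
    have aP: "a \<in> \<Phi>" using sim_mem[OF a(1)] .
    define \<delta> where "\<delta> = inv w2 a"
    have dneg: "c \<bullet> \<delta> < 0" unfolding \<delta>_def using max_P[OF m2 aPos a(2)] .
    have dP: "\<delta> \<in> \<Phi>" unfolding \<delta>_def using W_mem[OF W_inv[OF w2W] aP] .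
    have da: "\<delta> \<bullet> \<alpha> = 0" unfolding \<delta>_def using W_inner[OF W_inv[OF w2W], of a \<theta>] i2 a(2) by simp
    have w1dP: "w1 \<delta> \<in> \<Phi>" using W_mem[OF w1W dP] .
    have "c \<bullet> w1 \<delta> > 0"
    proof (rule ccontr)
      assume "\<not> c \<bullet> w1 \<delta> > 0"
      then have "c \<bullet> w1 \<delta> < 0" using pos_or_neg[OF w1dP] by blast
      then have gpos: "- w1 \<delta> \<in> Pos" using neg_pos[OF w1dP] by blast
      have "(- w1 \<delta>) \<bullet> \<theta> = - (w1 \<delta> \<bullet> w1 \<alpha>)" using w1a by simp
      also have "\<dots> = 0" using W_inner[OF w1W] da by simp
      finally have "c \<bullet> inv w1 (- w1 \<delta>) < 0" using max_P[OF m1 gpos] by blast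
      moreover have "inv w1 (- w1 \<delta>) = - \<delta>" using W_neg[OF w1W] W_apply_inv[OF w1W] by metis
      ultimately show False using dneg by simp
    qed
    moreover have "y a = w1 \<delta>" unfolding y_def \<delta>_def by simp
    ultimately show ?thesis by simp
  qed
  have "y = id"
  proof (rule ccontr)
    assume "y \<noteq> id"
    then have "len y > 0" using len0[OF yW] by blast
    then obtain a where a: "a \<in> Sim" "c \<bullet> y a < 0" using L2[OF yW] by blast
    have aP: "a \<in> \<Phi>" using sim_mem[OF a(1)] .
    have yaP: "y a \<in> \<Phi>" using W_mem[OF yW aP] .
    have "- y a \<in> Pos" using neg_pos[OF yaP a(2)] .
    then have "\<theta> \<bullet> (- y a) \<ge> 0" using nn_inner[OF th_dom pos_comb] by blast
    then have "\<theta> \<bullet> y a \<le> 0" by simp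
    moreover have "\<theta> \<bullet> y a = \<theta> \<bullet> a" using W_inner[OF yW, of \<theta> a] yt by simp
    moreover have "\<theta> \<bullet> a \<ge> 0" using th_dom a(1) by blast
    ultimately have "a \<bullet> \<theta> = 0" by (simp add: inner_commute)
    then have "c \<bullet> y a > 0" using good a(1) by blast
    then show False using a(2) by simp
  qed
  show "w1 = w2"
  proof
    fix v
    have "w1 v = y (w2 v)" unfolding y_def using W_apply_inv[OF w2W] by simp
    then show "w1 v = w2 v" using \<open>y = id\<close> by simp
  qed
qed

lemma main: "\<exists>!w. w \<in> W \<and> inv w \<theta> = \<alpha> \<and> (\<forall>u. u \<in> W \<and> inv u \<theta> = \<alpha> \<and> bruhat_le \<Phi> c w u \<longrightarrow> u = w)"
  using exists_max max_unique unfolding maxS_def by blast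

end
end

theorem mainTheorem13:
  fixes \<Phi> :: "'a::euclidean_space set" and c \<theta> \<alpha> :: 'a
  assumes "root_system \<Phi>" and "irreducible_rs \<Phi>"
    and "regular_vec \<Phi> c"
    and "highest_root \<Phi> c \<theta>"
    and "\<alpha> \<in> \<Phi>" and "\<alpha> \<bullet> \<alpha> = \<theta> \<bullet> \<theta>"
  shows "\<exists>!w. w \<in> weyl_group \<Phi> \<and> inv w \<theta> = \<alpha> \<and>
            (\<forall>u. u \<in> weyl_group \<Phi> \<and> inv u \<theta> = \<alpha> \<and> bruhat_le \<Phi> c w u \<longrightarrow> u = w)"
proof -
  interpret RS \<Phi> c using assms(1,3) by unfold_locales
  show ?thesis using main[OF assms(4) assms(5) assms(6)] .
qed

end
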